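(* Let $a<b$ be real numbers and let $g:[a,b)\to\mathbb{R}$ be a continuous function that is differentiable on $(a,b)$ and has a (finite) right-hand derivative at the point $a$. For every $x\in(a,b)$ let $\xi(x)$ be the supremum of the numbers $\tau\in(a,x]$ such that $g'(\tau)\cdot(x-a)=g(x)-g(a)$. Then $$\varlimsup_{x\to a}\frac{\xi(x)-a}{x-a}\ \geq\ \frac1e.$$
   Context: Limits at $a$ are right-hand limits. *)

theory Defs
  imports "HOL-Analysis.Analysis"
begin

definition xi_point :: "(real \<Rightarrow> real) \<Rightarrow> real \<Rightarrow> real \<Rightarrow> real" where
  "xi_point g a x = Sup {\<tau> \<in> {a<..x}. deriv g \<tau> * (x - a) = g x - g a}"

end

theory Submission
  imports Defs
begin

lemma core:
  fixes h :: "real \<Rightarrow> real" and c \<delta> D :: real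
  assumes c: "0 < c" "c < exp(-1)" and \<delta>: "0 < \<delta>"
    and lim: "((\<lambda>t. h t / t) \<longlongrightarrow> D) (at_right 0)"
    and A: "\<And>x s t. 0 < x \<Longrightarrow> x < \<delta> \<Longrightarrow> c*x \<le> s \<Longrightarrow> s < t \<Longrightarrow> t \<le> x \<Longrightarrow> h t - h s > h x / x * (t - s)"
  shows False
proof -
  have l1: "(\<lambda>n. (1 + (-1) / real n) ^ n * (1 - 1 / real n)) \<longlonglongrightarrow> exp (-1) * 1"
  proof (rule tendsto_mult)
    show "(\<lambda>n. 1 - 1 / real n) \<longlonglongrightarrow> 1"
      using tendsto_diff[OF tendsto_const[of "1::real"] lim_inverse_n'] by simp
  qed (rule tendsto_exp_limit_sequentially)
  have "eventually (\<lambda>n. c < (1 + (-1) / real n) ^ n * (1 - 1 / real n)) sequentially"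
    using order_tendstoD(1)[OF l1] c by simp
  moreover have "eventually (\<lambda>n. 2 \<le> n) sequentially" by (rule eventually_ge_at_top)
  ultimately have "eventually (\<lambda>n. c < (1 + (-1) / real n) ^ n * (1 - 1 / real n) \<and> 2 \<le> n) sequentially"
    by (rule eventually_conj)
  then obtain N where "\<forall>n\<ge>N. c < (1 + (-1) / real n) ^ n * (1 - 1 / real n) \<and> 2 \<le> n"
    unfolding eventually_sequentially by blast
  then obtain n :: nat where n2: "2 \<le> n" and cn: "c < (1 + (-1) / real n) ^ n * (1 - 1 / real n)"
    by blast
  define r where "r = 1 - 1 / real n"
  have r0: "0 < r" and r1: "r < 1" using n2 by (auto simp: r_def field_simps)
  have "r^(n+1) = (1 + (-1)/real n)^n * (1 - 1/real n)" by (simp add: r_def power_Suc2)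
  then have crm: "c \<le> r ^ (n+1)" using cn by linarith
  have cr: "c \<le> r"
  proof -
    have "r ^ (n+1) \<le> r ^ 1" using r0 r1 by (intro power_decreasing) auto
    then show ?thesis using crm by simp
  qed
  define y where "y k = r ^ k * (\<delta>/2)" for k
  define a where "a k = h (y k) / y k" for k
  define e where "e k = a k - D" for k
  have y0: "0 < y k" for k using r0 \<delta> by (simp add: y_def)
  have yd: "y k < \<delta>" for k
  proof -
    have "r ^ k \<le> 1" using r0 r1 by (simp add: power_le_one)
    then have "r ^ k * (\<delta>/2) \<le> 1 * (\<delta>/2)" using \<delta> by (intro mult_right_mono) auto
    then show ?thesis using \<delta> unfolding y_def by simp
  qed
  have ySuc: "y (Suc k) = r * y k" for k by (simp add: y_def)
  have hy: "h (y k) = y k * a k" for k using y0[of k] by (simp add: a_def)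
  have ylim: "y \<longlonglongrightarrow> 0"
    unfolding y_def using r0 r1 by (intro tendsto_mult_left_zero LIMSEQ_power_zero) auto
  have yfl: "filterlim y (at_right 0) sequentially"
    using ylim y0 by (auto simp: filterlim_at intro!: always_eventually) (metis less_irrefl)
  have alim: "a \<longlonglongrightarrow> D"
    unfolding a_def using filterlim_compose[OF lim yfl] by (simp add: o_def)
  have elim: "e \<longlonglongrightarrow> 0"
    unfolding e_def using tendsto_diff[OF alim tendsto_const[of D]] by simp
  have adec: "a (Suc k) < a k" for k
  proof -
    have "h (y k) - h (y (Suc k)) > h (y k) / y k * (y k - y (Suc k))"
    proof (rule A)
      show "c * y k \<le> y (Suc k)" unfolding ySuc using cr y0[of k] by (simp add: mult_right_mono)
      show "y (Suc k) < y k" unfolding ySuc using r1 y0[of k] by simp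
    qed (use y0 yd in auto)
    then have "h (y k) - h (y (Suc k)) > a k * (y k - y (Suc k))" by (simp add: a_def)
    then have "y k * a k - y (Suc k) * a (Suc k) > a k * (y k - y (Suc k))" by (simp only: hy)
    then have "y k * a k - r * y k * a (Suc k) > a k * (y k - r * y k)" by (simp only: ySuc mult.assoc)
    then have "r * y k * a (Suc k) < r * y k * a k" by (simp add: algebra_simps)
    then show ?thesis using r0 y0[of k] by (simp add: mult_less_cancel_left)
  qed
  have edec: "e (Suc k) < e k" for k using adec[of k] by (simp add: e_def)
  have decs: "decseq e" using edec by (intro decseq_SucI less_imp_le)
  have epos: "0 < e k" for k using decseq_ge[OF decs elim, of "Suc k"] edec[of k] by simp
  have Q: "e (i+n) - r * e (i+n+1) > (1 - r) * e i" for i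
  proof -
    have yn1: "y (i+n+1) = r^(n+1) * y i" and yn: "y (i+n) = r^n * y i"
      by (simp_all add: y_def power_add)
    have rn: "r^n \<le> 1" using r0 r1 by (simp add: power_le_one)
    have "h (y (i+n)) - h (y (i+n+1)) > h (y i) / y i * (y (i+n) - y (i+n+1))"
    proof (rule A)
      show "c * y i \<le> y (i+n+1)" using crm y0[of i] yn1 by (simp add: mult_right_mono)
      show "y (i+n+1) < y (i+n)" using ySuc[of "i+n"] r1 y0[of "i+n"] by simp
      show "y (i+n) \<le> y i" using yn rn y0[of i] by (simp add: mult_left_le_one_le)
    qed (use y0 yd in auto)
    then have "h (y (i+n)) - h (y (i+n+1)) > a i * (y (i+n) - y (i+n+1))" by (simp add: a_def)
    then have "y (i+n) * a (i+n) - y (i+n+1) * a (i+n+1) > a i * (y (i+n) - y (i+n+1))" by (simp only: hy)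
    moreover have "y (i+n+1) = r * y (i+n)" using ySuc[of "i+n"] by simp
    ultimately have "y (i+n) * a (i+n) - r * y (i+n) * a (i+n+1) > a i * (y (i+n) - r * y (i+n))" by simp
    then have "y (i+n) * (a (i+n) - r * a (i+n+1)) > y (i+n) * ((1 - r) * a i)"
      by (simp add: algebra_simps)
    then have "a (i+n) - r * a (i+n+1) > (1 - r) * a i"
      using y0[of "i+n"] by (simp add: mult_less_cancel_left)
    then show ?thesis by (simp add: e_def algebra_simps)
  qed
  define W where "W i = (\<Sum>t<n+1. e (i+t))" for i
  define \<Psi> where "\<Psi> i = e (i+n) - (1 - r) * W i" for i
  have Wsuc: "W (Suc i) = W i - e i + e (i+n+1)" for i
  proof -
    have "W i = e i + (\<Sum>t<n. e (Suc i + t))"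
      unfolding W_def Suc_eq_plus1[symmetric] sum.lessThan_Suc_shift by simp
    moreover have "W (Suc i) = (\<Sum>t<n. e (Suc i + t)) + e (i+n+1)"
      unfolding W_def Suc_eq_plus1[symmetric] sum.lessThan_Suc by simp
    ultimately show ?thesis by simp
  qed
  have Psidec: "\<Psi> (Suc i) < \<Psi> i" for i
    using Q[of i] unfolding \<Psi>_def Wsuc by (simp add: algebra_simps)
  have Psile: "\<Psi> i \<le> \<Psi> 0" for i
  proof (induction i)
    case (Suc i)
    then show ?case using Psidec[of i] by linarith
  qed simp
  have Psilim: "\<Psi> \<longlonglongrightarrow> 0"
  proof -
    have "(\<lambda>i. e (i+n) - (1 - r) * (\<Sum>t<n+1. e (i+t))) \<longlonglongrightarrow> 0 - (1 - r) * (\<Sum>t<n+1. 0)"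
      by (intro tendsto_intros tendsto_sum LIMSEQ_ignore_initial_segment elim)
    then show ?thesis unfolding \<Psi>_def W_def by simp
  qed
  have "0 \<le> \<Psi> 0"
    by (rule tendsto_upperbound[OF Psilim always_eventually]) (use Psile in auto)
  moreover have "\<Psi> 0 < 0"
  proof -
    have "(\<Sum>t<n+1. e n) \<le> W 0"
      unfolding W_def by (intro sum_mono) (auto intro: decseqD[OF decs])
    then have "(real n + 1) * e n \<le> W 0" by (simp add: add.commute)
    then have "(1 - r) * ((real n + 1) * e n) \<le> (1 - r) * W 0"
      using r1 by (intro mult_left_mono) auto
    moreover have "(1 - r) * ((real n + 1) * e n) = e n + e n / real n"
      using n2 by (simp add: r_def field_simps)
    moreover have "e n / real n > 0" using epos[of n] n2 by simp
    ultimately show ?thesis unfolding \<Psi>_def by simp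
  qed
  ultimately show False by simp
qed


lemma inj_mono_aux:
  fixes f :: "real \<Rightarrow> real"
  assumes cont: "continuous_on {u..v} f" and inj: "inj_on f {u..v}" and uv: "f u < f v"
    and st: "u \<le> s" "s < t" "t \<le> v"
  shows "f s < f t"
proof -
  have uv': "u < v" using st by simp
  have bnd: "f u < f z \<and> f z < f v" if "u < z" "z < v" for z
    using continuous_inj_imp_mono[OF that cont inj] uv by auto
  show ?thesis
  proof (cases "s = u")
    case True
    then show ?thesis using bnd[of t] st uv by (cases "t = v") auto
  next
    case False
    then have su: "u < s" using st by simp
    have "(f u < f s \<and> f s < f t) \<or> (f t < f s \<and> f s < f u)"
      by (rule continuous_inj_imp_mono[OF su st(2)])
        (use cont inj st in \<open>auto intro: continuous_on_subset inj_on_subset\<close>)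
    moreover have "f u < f t" using bnd[of t] st su uv by (cases "t = v") auto
    ultimately show ?thesis by auto
  qed
qed

lemma inj_mono:
  fixes f :: "real \<Rightarrow> real"
  assumes cont: "continuous_on {u..v} f" and inj: "inj_on f {u..v}"
    and pq: "u \<le> p" "p < q" "q \<le> v" "f p < f q"
    and st: "u \<le> s" "s < t" "t \<le> v"
  shows "f s < f t"
proof (cases "f u < f v")
  case True
  then show ?thesis by (rule inj_mono_aux[OF cont inj _ st])
next
  case False
  have "f u \<noteq> f v" using inj pq by (auto dest: inj_onD)
  then have "-f u < -f v" using False by simp
  moreover have "continuous_on {u..v} (\<lambda>x. - f x)" using cont by (intro continuous_intros)
  moreover have "inj_on (\<lambda>x. - f x) {u..v}" using inj by (auto simp: inj_on_def)
  ultimately have "- f p < - f q"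
    using inj_mono_aux[of u v "\<lambda>x. - f x" p q] pq by simp
  then show ?thesis using pq by simp
qed

theorem corollary1:
  fixes g :: "real \<Rightarrow> real" and a b :: real
  assumes "a < b"
    and "continuous_on {a..<b} g"
    and "\<forall>x\<in>{a<..<b}. g differentiable (at x)"
    and "\<exists>D. (g has_real_derivative D) (at a within {a..<b})"
  shows "Limsup (at_right a) (\<lambda>x. ereal ((xi_point g a x - a) / (x - a))) \<ge> ereal (1 / exp 1)"
proof (rule ccontr)
  note ab = assms(1) and gcont = assms(2)
  define L where "L = Limsup (at_right a) (\<lambda>x. ereal ((xi_point g a x - a) / (x - a)))"
  assume "\<not> ?thesis"
  then have "L < ereal (1 / exp 1)" unfolding L_def by simp
  then obtain c' where c'1: "L < ereal c'" and c'2: "ereal c' < ereal (1 / exp 1)"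
    using ereal_dense2 by blast
  define c where "c = max c' (1 / (2 * exp 1))"
  have c0: "0 < c" unfolding c_def by (simp add: less_max_iff_disj)
  have c1: "c < 1 / exp 1" using c'2 unfolding c_def by (simp add: field_simps)
  have cexp: "c < exp (-1)" using c1 by (simp add: exp_minus field_simps)
  have cl1: "c < 1" using c1 by (smt (verit) exp_gt_one divide_less_eq_1_pos exp_gt_zero)
  have "L < ereal c" using c'1 unfolding c_def by (meson ereal_less_eq(3) max.cobounded1 order_less_le_trans)
  then have "eventually (\<lambda>x. ereal ((xi_point g a x - a) / (x - a)) < ereal c) (at_right a)"
    unfolding L_def by (rule Limsup_lessD)
  then obtain \<beta> where \<beta>: "\<beta> > a" and \<beta>1: "\<And>x. a < x \<Longrightarrow> x < \<beta> \<Longrightarrow> (xi_point g a x - a) / (x - a) < c"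
    unfolding eventually_at_right_field by auto
  define \<beta>' where "\<beta>' = min \<beta> b"
  define \<delta> where "\<delta> = \<beta>' - a"
  have \<delta>0: "0 < \<delta>" using \<beta> ab by (simp add: \<delta>_def \<beta>'_def)
  have \<beta>'b: "\<beta>' \<le> b" by (simp add: \<beta>'_def)
  have dg: "(g has_real_derivative deriv g \<tau>) (at \<tau>)" if "a < \<tau>" "\<tau> < b" for \<tau>
    using assms(3) that DERIV_deriv_iff_real_differentiable by auto
  have K: "deriv g \<tau> * (x - a) \<noteq> g x - g a"
    if x: "a < x" "x < \<beta>'" and \<tau>: "a + c * (x - a) \<le> \<tau>" "\<tau> \<le> x" for x \<tau>
  proof
    assume eq: "deriv g \<tau> * (x - a) = g x - g a"
    have "\<tau> > a" using \<tau> x c0 by (smt (verit) mult_pos_pos)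
    then have mem: "\<tau> \<in> {\<tau> \<in> {a<..x}. deriv g \<tau> * (x - a) = g x - g a}" using eq \<tau> by auto
    have "bdd_above {\<tau> \<in> {a<..x}. deriv g \<tau> * (x - a) = g x - g a}" by (rule bdd_aboveI[of _ x]) auto
    then have "\<tau> \<le> xi_point g a x" unfolding xi_point_def using mem by (rule cSup_upper[rotated])
    moreover have "(xi_point g a x - a) / (x - a) < c" using \<beta>1 x by (simp add: \<beta>'_def)
    then have "xi_point g a x - a < c * (x - a)" using x by (simp add: divide_less_eq)
    ultimately show False using \<tau> by simp
  qed
  define \<phi> where "\<phi> x = (g x - g a) / (x - a)" for x
  define \<phi>' where "\<phi>' x = ((deriv g x - 0) * (x - a) - (g x - g a) * (1 - 0)) / ((x - a) * (x - a))" for x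
  have d\<phi>: "(\<phi> has_real_derivative \<phi>' x) (at x)" if "a < x" "x < \<beta>'" for x
    unfolding \<phi>_def \<phi>'_def
    by (rule DERIV_divide[OF DERIV_diff[OF dg DERIV_const] DERIV_diff[OF DERIV_ident DERIV_const]])
      (use that \<beta>'b in auto)
  have \<phi>'nz: "\<phi>' x \<noteq> 0" if "a < x" "x < \<beta>'" for x
  proof -
    have "c * (x - a) \<le> 1 * (x - a)" using that cl1 by (intro mult_right_mono) auto
    then have "deriv g x * (x - a) \<noteq> g x - g a"
      by (intro K[OF that]) auto
    then show ?thesis using that by (simp add: \<phi>'_def)
  qed
  have \<phi>cont: "continuous_on {s..t} \<phi>" if "a < s" "t < \<beta>'" for s t
  proof (intro continuous_at_imp_continuous_on ballI)
    fix x assume "x \<in> {s..t}"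
    then have "a < x" "x < \<beta>'" using that by auto
    then show "isCont \<phi> x" by (rule DERIV_isCont[OF d\<phi>])
  qed
  have \<phi>inj0: "\<phi> p \<noteq> \<phi> q" if pq: "a < p" "p < q" "q < \<beta>'" for p q
  proof
    assume eq: "\<phi> p = \<phi> q"
    obtain l z where z: "p < z" "z < q" and dz: "DERIV \<phi> z :> l" and l: "\<phi> q - \<phi> p = (q - p) * l"
      using MVT[OF pq(2) \<phi>cont[of p q]] pq d\<phi> unfolding real_differentiable_def
      by (metis less_trans)
    have "l = 0" using l eq that by simp
    moreover have "l = \<phi>' z" using DERIV_unique[OF dz d\<phi>[of z]] z that by simp
    ultimately show False using \<phi>'nz[of z] z that by simp
  qed
  have \<phi>inj: "inj_on \<phi> {s..t}" if "a < s" "t < \<beta>'" for s t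
    unfolding inj_on_def
  proof (intro ballI impI)
    fix p q assume "p \<in> {s..t}" "q \<in> {s..t}" "\<phi> p = \<phi> q"
    then show "p = q" using \<phi>inj0[of p q] \<phi>inj0[of q p] that by (cases p q rule: linorder_cases) auto
  qed
  define p0 where "p0 = a + \<delta> / 3"
  define q0 where "q0 = a + 2 * \<delta> / 3"
  have p0q0: "a < p0" "p0 < q0" "q0 < \<beta>'" using \<delta>0 by (auto simp: p0_def q0_def \<delta>_def field_simps)
  define \<sigma> :: real where "\<sigma> = (if \<phi> p0 < \<phi> q0 then 1 else -1)"
  have \<sigma>sq: "\<sigma> * \<sigma> = 1" and \<sigma>nz: "\<sigma> \<noteq> 0" by (auto simp: \<sigma>_def)
  have \<sigma>pq: "\<sigma> * \<phi> p0 < \<sigma> * \<phi> q0"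
    using \<phi>inj0[OF p0q0] by (auto simp: \<sigma>_def)
  have mono: "\<sigma> * \<phi> s < \<sigma> * \<phi> t" if "a < s" "s < t" "t < \<beta>'" for s t
  proof (rule inj_mono[where u = "min s p0" and v = "max t q0" and p = p0 and q = q0 and f = "\<lambda>x. \<sigma> * \<phi> x"])
    show "continuous_on {min s p0..max t q0} (\<lambda>x. \<sigma> * \<phi> x)"
      using \<phi>cont[of "min s p0" "max t q0"] that p0q0 by (intro continuous_intros) auto
    show "inj_on (\<lambda>x. \<sigma> * \<phi> x) {min s p0..max t q0}"
      using \<phi>inj[of "min s p0" "max t q0"] that p0q0 \<sigma>nz by (auto simp: inj_on_def)
  qed (use that p0q0 \<sigma>pq in auto)
  obtain D where D: "(g has_real_derivative D) (at a within {a..<b})" using assms(4) by blast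
  define h where "h t = \<sigma> * (g (a + t) - g a)" for t
  show False
  proof (rule core[of c \<delta> h "\<sigma> * D"])
    show "0 < c" "c < exp (-1)" "0 < \<delta>" by (fact c0 cexp \<delta>0)+
    have "(g has_real_derivative D) (at a within {a..a + \<delta>/2})"
      by (rule has_field_derivative_subset[OF D]) (use \<delta>0 \<beta>'b in \<open>auto simp: \<delta>_def field_simps\<close>)
    then have "(g has_real_derivative D) (at_right a)"
      using at_within_Icc_at_right[of a "a + \<delta>/2"] \<delta>0 by simp
    then have "((\<lambda>y. (g y - g a) / (y - a)) \<longlongrightarrow> D) (at_right a)"
      by (simp add: has_field_derivative_iff)
    then have "((\<lambda>t. (g (t + a) - g a) / (t + a - a)) \<longlongrightarrow> D) (at_right 0)"
      unfolding at_right_to_0[of a] filterlim_filtermap by simp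
    then have "((\<lambda>t. \<sigma> * ((g (t + a) - g a) / (t + a - a))) \<longlongrightarrow> \<sigma> * D) (at_right 0)"
      by (rule tendsto_mult_left)
    moreover have "(\<lambda>t. \<sigma> * ((g (t + a) - g a) / (t + a - a))) = (\<lambda>t. h t / t)"
      by (auto simp: h_def add.commute)
    ultimately show "((\<lambda>t. h t / t) \<longlongrightarrow> \<sigma> * D) (at_right 0)" by simp
  next
    fix x s t assume x: "0 < x" "x < \<delta>" and st: "c * x \<le> s" "s < t" "t \<le> x"
    define X where "X = a + x"
    define u where "u = a + c * x"
    have X: "a < X" "X < \<beta>'" using x by (auto simp: X_def \<delta>_def)
    have u: "a < u" "u < X" using x c0 cl1 by (auto simp: u_def X_def)
    define G where "G \<tau> = \<sigma> * (g \<tau> - g a) - (\<tau> - a) * (\<sigma> * \<phi> X)" for \<tau>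
    have Gcont: "continuous_on {u..X} G"
    proof -
      have "continuous_on {u..X} g" by (rule continuous_on_subset[OF gcont]) (use u X \<beta>'b in auto)
      then show ?thesis unfolding G_def by (intro continuous_intros)
    qed
    have dG: "(G has_real_derivative (\<sigma> * (deriv g z - 0) - (1 - 0) * (\<sigma> * \<phi> X))) (at z)"
      if "u < z" "z < X" for z
    proof -
      have "a < z" "z < b" using that u X \<beta>'b by auto
      then have d1: "((\<lambda>\<tau>. \<sigma> * (g \<tau> - g a)) has_real_derivative \<sigma> * (deriv g z - 0)) (at z)"
        by (intro DERIV_cmult DERIV_diff dg DERIV_const)
      have d2: "((\<lambda>\<tau>. (\<tau> - a) * (\<sigma> * \<phi> X)) has_real_derivative (1 - 0) * (\<sigma> * \<phi> X)) (at z)"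
        by (intro DERIV_cmult_right DERIV_diff DERIV_ident DERIV_const)
      show ?thesis unfolding G_def by (rule DERIV_diff[OF d1 d2])
    qed
    have Ginj: "inj_on G {u..X}"
      unfolding inj_on_def
    proof (intro ballI impI)
      have noteq: "G p \<noteq> G q" if pq: "u \<le> p" "p < q" "q \<le> X" for p q
      proof
        assume eq: "G p = G q"
        obtain l z where z: "p < z" "z < q" and dz: "DERIV G z :> l" and l: "G q - G p = (q - p) * l"
          using MVT[OF pq(2) continuous_on_subset[OF Gcont]] pq dG unfolding real_differentiable_def
          by (smt (verit) atLeastAtMost_iff subsetI)
        have "l = 0" using l eq that by simp
        moreover have "l = \<sigma> * (deriv g z - 0) - (1 - 0) * (\<sigma> * \<phi> X)"
          using DERIV_unique[OF dz dG[of z]] z that by simp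
        ultimately have "\<sigma> * (deriv g z - \<phi> X) = 0" by (simp add: algebra_simps)
        then have "deriv g z = \<phi> X" using \<sigma>nz by simp
        then have "deriv g z * (X - a) = g X - g a" using X by (simp add: \<phi>_def)
        moreover have "a + c * (X - a) \<le> z" "z \<le> X" using z that by (auto simp: u_def X_def)
        ultimately show False using K[OF X] by blast
      qed
      fix p q assume "p \<in> {u..X}" "q \<in> {u..X}" "G p = G q"
      then show "p = q" using noteq[of p q] noteq[of q p] by (cases p q rule: linorder_cases) auto
    qed
    have GX: "G X = 0" using X by (simp add: G_def \<phi>_def)
    have eu: "g u - g a = (u - a) * \<phi> u" using u by (simp add: \<phi>_def)
    have Gu: "G u = (u - a) * (\<sigma> * \<phi> u - \<sigma> * \<phi> X)" unfolding G_def eu by (simp add: algebra_simps)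
    have "G u < 0" unfolding Gu using mono[of u X] u X by (simp add: mult_pos_neg)
    then have Guv: "G u < G X" using GX by simp
    have "G (a + s) < G (a + t)"
      by (rule inj_mono[OF Gcont Ginj _ u(2) order.refl Guv]) (use st x c0 in \<open>auto simp: u_def X_def\<close>)
    moreover have "h x / x = \<sigma> * \<phi> X" using x by (simp add: h_def \<phi>_def X_def)
    ultimately show "h t - h s > h x / x * (t - s)"
      by (simp add: G_def h_def algebra_simps)
  qed
qed

end
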